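(* Let $\lambda$ be a partition with $n$ parts and let $\beta \in U_\lambda(n)$. If $\beta \notin UGC_\lambda(n)$, then the terminal pair $(\lambda,\beta)$ is not nonpermutable; i.e. there is a permutation $\pi \neq (1,\dots,n)$ of $[n]$ with $\mathcal{LD}_\lambda(\beta;\pi) \neq \emptyset$.
   Context: Fix an integer $n \geq 1$ and write $[k] = \{1,\dots,k\}$. A partition is $\lambda = (\lambda_1,\dots,\lambda_n)$ with $\lambda_1 \geq \dots \geq \lambda_n \geq 0$ integers. Let $R_\lambda \subseteq [n-1]$ be the set of $q \in [n-1]$ with $\lambda_q > \lambda_{q+1}$; write its elements $q_1 < \dots < q_r$, and set $q_0 := 0$, $q_{r+1} := n$. For $h \in [r+1]$ the $h$-th carrel is the index interval $\{q_{h-1}+1,\dots,q_h\}$. A $\lambda$-tuple is an $n$-tuple $\beta$ with entries in $[n]$, considered with this carrel structure; it is upper if $\beta_i \geq i$ for all $i$. $U_\lambda(n)$ is the set of upper $\lambda$-tuples. Critical indices: for $\beta \in U_\lambda(n)$ and $h \in [r+1]$, set $x_1 := q_h$; given $x_{u-1}$, if some index $x$ with $q_{h-1} < x < x_{u-1}$ satisfies $\beta_{x_{u-1}} - \beta_x > x_{u-1} - x$, let $x_u$ be the largest such $x$, otherwise stop. The $x_u$ are the critical indices of $\beta$ in carrel $h$, and the pairs $(x_u, \beta_{x_u})$ form its critical list. The critical list of $\beta$ is a flag critical list if for every $h \in [r]$, $\beta_{q_h} \leq \beta_k$ where $k$ is the smallest critical index of $\beta$ in carrel $h+1$. $UGC_\lambda(n)$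 is the set of $\beta \in U_\lambda(n)$ whose critical list is a flag critical list. Lattice paths: lattice points are integer pairs $(a,b)$ with $a \geq 0$, $b \geq 1$. A lattice path is a sequence of lattice points each consecutive step of which is $(a,b) \to (a+1,b)$ (easterly) or $(a,b) \to (a,b+1)$ (southerly). An $n$-path is $(\Lambda_1,\dots,\Lambda_n)$ with $\Lambda_m$ a lattice path starting at $(n-m,m)$. The terminals of $(\lambda,\beta)$ are $P_m := (\lambda_m + n - m, \beta_m)$, $m \in [n]$. For a permutation $\pi$ of $[n]$, $\mathcal{LD}_\lambda(\beta;\pi)$ is the set of $n$-paths with $\Lambda_m$ ending at $P_{\pi_m}$ for every $m$ and with no two distinct components sharing a lattice point. The pair $(\lambda,\beta)$ is nonpermutable if $\mathcal{LD}_\lambda(\beta;\pi) = \emptyset$ for every permutation $\pi \neq (1,\dots,n)$. *)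

theory Defs
  imports "HOL-Combinatorics.Permutations"
begin

text \<open>Conventions: n :: nat; a partition lam and a tuple beta are functions
  nat => nat of which only the values at indices 1..n are relevant.\<close>

definition is_partition :: "nat \<Rightarrow> (nat \<Rightarrow> nat) \<Rightarrow> bool" where
  "is_partition n lam \<longleftrightarrow> (\<forall>i\<in>{1..<n}. lam (Suc i) \<le> lam i)"

definition R_set :: "nat \<Rightarrow> (nat \<Rightarrow> nat) \<Rightarrow> nat set" where
  "R_set n lam = {q \<in> {1..n-1}. lam (Suc q) < lam q}"

definition num_r :: "nat \<Rightarrow> (nat \<Rightarrow> nat) \<Rightarrow> nat" where
  "num_r n lam = card (R_set n lam)"

definition qpt :: "nat \<Rightarrow> (nat \<Rightarrow> nat) \<Rightarrow> nat \<Rightarrow> nat" where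
  "qpt n lam h = (0 # sorted_list_of_set (R_set n lam) @ [n]) ! h"

definition lam_tuple :: "nat \<Rightarrow> (nat \<Rightarrow> nat) \<Rightarrow> bool" where
  "lam_tuple n beta \<longleftrightarrow> (\<forall>i\<in>{1..n}. beta i \<in> {1..n})"

definition upper :: "nat \<Rightarrow> (nat \<Rightarrow> nat) \<Rightarrow> bool" where
  "upper n beta \<longleftrightarrow> lam_tuple n beta \<and> (\<forall>i\<in>{1..n}. i \<le> beta i)"

definition crit_step :: "(nat \<Rightarrow> nat) \<Rightarrow> nat \<Rightarrow> nat \<Rightarrow> nat \<Rightarrow> bool" where
  "crit_step beta lo xprev x \<longleftrightarrow> lo < x \<and> x < xprev \<and>
     int (beta xprev) - int (beta x) > int xprev - int x"

text \<open>Critical indices of beta in the carrel {lo+1..hi} (lo = q_(h-1), hi = q_h).\<close>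
inductive_set crit_idx :: "(nat \<Rightarrow> nat) \<Rightarrow> nat \<Rightarrow> nat \<Rightarrow> nat set"
  for beta :: "nat \<Rightarrow> nat" and lo :: nat and hi :: nat where
  start: "hi \<in> crit_idx beta lo hi"
| step: "x \<in> crit_idx beta lo hi \<Longrightarrow> \<exists>y. crit_step beta lo x y \<Longrightarrow>
          (GREATEST y. crit_step beta lo x y) \<in> crit_idx beta lo hi"

definition flag_critical :: "nat \<Rightarrow> (nat \<Rightarrow> nat) \<Rightarrow> (nat \<Rightarrow> nat) \<Rightarrow> bool" where
  "flag_critical n lam beta \<longleftrightarrow>
     (\<forall>h\<in>{1..num_r n lam}.
        beta (qpt n lam h) \<le> beta (Min (crit_idx beta (qpt n lam h) (qpt n lam (Suc h)))))"

definition UGC :: "nat \<Rightarrow> (nat \<Rightarrow> nat) \<Rightarrow> (nat \<Rightarrow> nat) \<Rightarrow> bool" where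
  "UGC n lam beta \<longleftrightarrow> upper n beta \<and> flag_critical n lam beta"

text \<open>Lattice points (a,b) with a >= 0, b >= 1; lattice paths as nonempty lists of
  points with east (a+1) or south (b+1) unit steps.\<close>
definition lattice_point :: "nat \<times> nat \<Rightarrow> bool" where
  "lattice_point p \<longleftrightarrow> 1 \<le> snd p"

definition lattice_path :: "(nat \<times> nat) list \<Rightarrow> bool" where
  "lattice_path L \<longleftrightarrow> L \<noteq> [] \<and> (\<forall>p\<in>set L. lattice_point p) \<and>
     (\<forall>i. Suc i < length L \<longrightarrow>
        (L ! Suc i = (Suc (fst (L ! i)), snd (L ! i)) \<or>
         L ! Suc i = (fst (L ! i), Suc (snd (L ! i)))))"

definition terminal :: "nat \<Rightarrow> (nat \<Rightarrow> nat) \<Rightarrow> (nat \<Rightarrow> nat) \<Rightarrow> nat \<Rightarrow> nat \<times> nat" where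
  "terminal n lam beta m = (lam m + n - m, beta m)"

definition LD :: "nat \<Rightarrow> (nat \<Rightarrow> nat) \<Rightarrow> (nat \<Rightarrow> nat) \<Rightarrow> (nat \<Rightarrow> nat)
                   \<Rightarrow> (nat \<Rightarrow> (nat \<times> nat) list) set" where
  "LD n lam beta \<pi> = {\<Lambda>.
     (\<forall>m\<in>{1..n}. lattice_path (\<Lambda> m) \<and> hd (\<Lambda> m) = (n - m, m) \<and>
                 last (\<Lambda> m) = terminal n lam beta (\<pi> m)) \<and>
     (\<forall>m\<in>{1..n}. \<forall>m'\<in>{1..n}. m \<noteq> m' \<longrightarrow> set (\<Lambda> m) \<inter> set (\<Lambda> m') = {})}"

definition nonpermutable :: "nat \<Rightarrow> (nat \<Rightarrow> nat) \<Rightarrow> (nat \<Rightarrow> nat) \<Rightarrow> bool" where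
  "nonpermutable n lam beta \<longleftrightarrow>
     (\<forall>\<pi>. \<pi> permutes {1..n} \<and> \<pi> \<noteq> id \<longrightarrow> LD n lam beta \<pi> = {})"

end

theory Submission imports Defs begin

definition esesf :: "nat\<Rightarrow>nat\<Rightarrow>nat\<Rightarrow>nat\<Rightarrow>nat\<Rightarrow>nat\<Rightarrow>nat\<Rightarrow>nat\<times>nat" where
 "esesf a0 s a1 r a2 e i = (if i \<le> a1 - a0 then (a0 + i, s)
    else if i \<le> (a1-a0) + (r-s) then (a1, s + (i - (a1-a0)))
    else if i \<le> (a1-a0)+(r-s)+(a2-a1) then (a1 + (i - (a1-a0) - (r-s)), r)
    else (a2, r + (i - (a1-a0) - (r-s) - (a2-a1))))"

definition eses :: "nat\<Rightarrow>nat\<Rightarrow>nat\<Rightarrow>nat\<Rightarrow>nat\<Rightarrow>nat\<Rightarrow>(nat\<times>nat) list" where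
 "eses a0 s a1 r a2 e = map (esesf a0 s a1 r a2 e) [0..<(a1-a0)+(r-s)+(a2-a1)+(e-r)+1]"

lemma eses_mem:
  assumes "p \<in> set (eses a0 s a1 r a2 e)" "a0 \<le> a1" "a1 \<le> a2" "s \<le> r" "r \<le> e"
  shows "(snd p = s \<and> a0 \<le> fst p \<and> fst p \<le> a1) \<or> (fst p = a1 \<and> s \<le> snd p \<and> snd p \<le> r)
     \<or> (snd p = r \<and> a1 \<le> fst p \<and> fst p \<le> a2) \<or> (fst p = a2 \<and> r \<le> snd p \<and> snd p \<le> e)"
proof -
  obtain i where i: "i \<le> (a1-a0)+(r-s)+(a2-a1)+(e-r)" "p = esesf a0 s a1 r a2 e i"
    using assms(1) unfolding eses_def by (auto simp del: upt_Suc simp: less_Suc_eq_le)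
  obtain d1 d2 d3 d4 where d: "a1 = a0 + d1" "r = s + d2" "a2 = a1 + d3" "e = r + d4"
    using assms by (metis le_add_diff_inverse)
  show ?thesis
  proof (cases "i \<le> d1")
    case True then show ?thesis using d i by (simp add: esesf_def)
  next
    case c1: False
    show ?thesis
    proof (cases "i \<le> d1 + d2")
      case True then show ?thesis using d c1 i by (simp add: esesf_def) arith
    next
      case c2: False
      show ?thesis
      proof (cases "i \<le> d1 + d2 + d3")
        case True then show ?thesis using d c1 c2 i by (simp add: esesf_def) arith
      next
        case False then show ?thesis using d c1 c2 i by (simp add: esesf_def) arith
      qed
    qed
  qed
qed

lemma eses_hd: "hd (eses a0 s a1 r a2 e) = (a0, s)"
  unfolding eses_def esesf_def by (simp add: hd_map del: upt_Suc)

lemma eses_last: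
  assumes "a0 \<le> a1" "a1 \<le> a2" "s \<le> r" "r \<le> e"
  shows "last (eses a0 s a1 r a2 e) = (a2, e)"
  using assms unfolding eses_def esesf_def by (auto simp: last_map)

lemma esesf_step:
  assumes "a0 \<le> a1" "a1 \<le> a2" "s \<le> r" "r \<le> e" "Suc i \<le> (a1-a0)+(r-s)+(a2-a1)+(e-r)"
  shows "esesf a0 s a1 r a2 e (Suc i) = (Suc (fst (esesf a0 s a1 r a2 e i)), snd (esesf a0 s a1 r a2 e i)) \<or>
         esesf a0 s a1 r a2 e (Suc i) = (fst (esesf a0 s a1 r a2 e i), Suc (snd (esesf a0 s a1 r a2 e i)))"
proof -
  obtain d1 d2 d3 d4 where d: "a1 = a0 + d1" "r = s + d2" "a2 = a1 + d3" "e = r + d4"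
    using assms by (metis le_add_diff_inverse)
  show ?thesis
  proof (cases "Suc i \<le> d1")
    case True then show ?thesis using d by (auto simp: esesf_def)
  next
    case c1: False
    show ?thesis
    proof (cases "Suc i \<le> d1 + d2")
      case True then show ?thesis using d c1 by (auto simp: esesf_def)
    next
      case c2: False
      show ?thesis
      proof (cases "Suc i \<le> d1 + d2 + d3")
        case True then show ?thesis using d c1 c2 by (auto simp: esesf_def)
      next
        case False then show ?thesis using d c1 c2 by (auto simp: esesf_def)
      qed
    qed
  qed
qed

lemma eses_path:
  assumes "a0 \<le> a1" "a1 \<le> a2" "s \<le> r" "r \<le> e" "1 \<le> s"
  shows "lattice_path (eses a0 s a1 r a2 e)"
  unfolding lattice_path_def
proof (intro conjI allI impI)
  show "eses a0 s a1 r a2 e \<noteq> []" unfolding eses_def by simp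
  show "\<forall>p\<in>set (eses a0 s a1 r a2 e). lattice_point p"
    using eses_mem[OF _ assms(1-4)] assms(5) assms(3,4) unfolding lattice_point_def by fastforce
  fix i assume i: "Suc i < length (eses a0 s a1 r a2 e)"
  then have i': "Suc i \<le> (a1-a0)+(r-s)+(a2-a1)+(e-r)" unfolding eses_def by simp
  have "eses a0 s a1 r a2 e ! Suc i = esesf a0 s a1 r a2 e (Suc i)"
       "eses a0 s a1 r a2 e ! i = esesf a0 s a1 r a2 e i"
    using i unfolding eses_def by (simp_all del: upt_Suc)
  then show "eses a0 s a1 r a2 e ! Suc i = (Suc (fst (eses a0 s a1 r a2 e ! i)), snd (eses a0 s a1 r a2 e ! i)) \<or>
         eses a0 s a1 r a2 e ! Suc i = (fst (eses a0 s a1 r a2 e ! i), Suc (snd (eses a0 s a1 r a2 e ! i)))"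
    using esesf_step[OF assms(1-4) i'] by simp
qed

lemma eses_disj:
  assumes wa: "a0 \<le> a1" "a1 \<le> a2" "s \<le> r" "r \<le> e"
    and wb: "b0 \<le> b1" "b1 \<le> b2" "t \<le> u" "u \<le> f"
    and st: "s < t"
    and c: "b2 < a1 \<or> (b1 < b2 \<and> b2 = a1 \<and> a1 < a2 \<and> r < u) \<or> (b0 < a0 \<and> b1 < a1 \<and> a1 = a2 \<and> e < u)"
  shows "set (eses a0 s a1 r a2 e) \<inter> set (eses b0 t b1 u b2 f) = {}"
proof (rule ccontr)
  assume "\<not> ?thesis"
  then obtain p where p: "p \<in> set (eses a0 s a1 r a2 e)" "p \<in> set (eses b0 t b1 u b2 f)" by blast
  note A = eses_mem[OF p(1) wa] and B = eses_mem[OF p(2) wb]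
  show False using A B wa wb st c by linarith
qed

lemma R_sub: "R_set n lam \<subseteq> {1..n-1}" unfolding R_set_def by auto

lemma qpt_facts:
  assumes h: "1 \<le> h" "h \<le> num_r n lam"
  defines "q \<equiv> qpt n lam h" and "q' \<equiv> qpt n lam (Suc h)"
  shows "q \<in> R_set n lam" "q < q'" "q' \<le> n"
        "\<And>z. z \<in> R_set n lam \<Longrightarrow> \<not> (q < z \<and> z < q')"
        "q' = n \<or> q' \<in> R_set n lam"
proof -
  define R where "R = R_set n lam"
  define xs where "xs = sorted_list_of_set R"
  have fin: "finite R" unfolding R_def using R_sub finite_subset by blast
  have sw: "sorted_wrt (<) xs" unfolding xs_def by simp
  have setxs: "set xs = R" unfolding xs_def using fin by simp
  have len: "length xs = num_r n lam" unfolding xs_def num_r_def R_def by simp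
  have qeq: "q = xs ! (h-1)"
    unfolding q_def qpt_def xs_def R_def using h len[unfolded xs_def R_def]
    by (cases h) (auto simp: nth_append)
  have q'eq: "q' = (if h < num_r n lam then xs ! h else n)"
    unfolding q'_def qpt_def xs_def R_def using h len[unfolded xs_def R_def]
    by (auto simp: nth_append)
  have mono: "\<And>i j. i < j \<Longrightarrow> j < length xs \<Longrightarrow> xs ! i < xs ! j"
    using sw by (simp add: sorted_wrt_iff_nth_less)
  have "h - 1 < length xs" using h len by simp
  then have "xs ! (h-1) \<in> set xs" by (rule nth_mem)
  then show qR: "q \<in> R_set n lam" using qeq setxs R_def by simp
  have qn: "q < n" using qR R_sub by fastforce
  show "q < q'"
  proof (cases "h < num_r n lam")
    case True then show ?thesis using q'eq qeq mono len h by simp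
  next
    case False then show ?thesis using q'eq qn by simp
  qed
  show "q' \<le> n"
  proof (cases "h < num_r n lam")
    case True
    then have "q' \<in> R" using q'eq setxs len by auto
    then show ?thesis using R_sub R_def by fastforce
  next
    case False then show ?thesis using q'eq by simp
  qed
  show "q' = n \<or> q' \<in> R_set n lam" using q'eq setxs len R_def by auto
  fix z assume "z \<in> R_set n lam"
  then obtain i where i: "i < length xs" "z = xs ! i" using setxs R_def by (metis in_set_conv_nth)
  show "\<not> (q < z \<and> z < q')"
  proof
    assume a: "q < z \<and> z < q'"
    have "h - 1 < i"
    proof (rule ccontr)
      assume "\<not> h - 1 < i"
      then have "i \<le> h - 1" by simp
      then have "i < h - 1 \<or> i = h - 1" by auto
      then have "xs ! i \<le> xs ! (h-1)"
      proof
        assume ih: "i < h - 1"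
        have "h - 1 < length xs" using h len by arith
        then show ?thesis using mono[of i "h-1"] ih by simp
      qed simp
      then show False using a i qeq by simp
    qed
    then have hi: "h \<le> i" by simp
    then have "h < num_r n lam" using i len by simp
    then have "q' = xs ! h" using q'eq by simp
    moreover have "xs ! h \<le> xs ! i" using hi mono[of h i] i by (cases "h = i") auto
    ultimately show False using a i by simp
  qed
qed

lemma crit_bounds:
  assumes "x \<in> crit_idx beta lo hi" "lo < hi"
  shows "lo < x \<and> x \<le> hi"
  using assms(1)
proof (induction rule: crit_idx.induct)
  case start then show ?case using assms(2) by simp
next
  case (step x)
  let ?P = "crit_step beta lo x"
  have "?P (Greatest ?P)" using \<open>\<exists>y. crit_step beta lo x y\<close> by (rule GreatestI_ex_nat[where b=x]) (auto simp: crit_step_def)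
  then have "lo < Greatest ?P \<and> Greatest ?P < x" unfolding crit_step_def by simp
  then show ?case using step.IH by simp
qed

lemma crit_f:
  assumes "x \<in> crit_idx beta lo hi" "lo < hi"
  shows "\<forall>y. x < y \<and> y \<le> hi \<longrightarrow> int (beta y) - int y > int (beta x) - int x"
  using assms(1)
proof (induction rule: crit_idx.induct)
  case start then show ?case by simp
next
  case (step x)
  let ?P = "crit_step beta lo x"
  let ?g = "Greatest ?P"
  have bnd: "\<And>y. ?P y \<Longrightarrow> y \<le> x" by (auto simp: crit_step_def)
  have Pg: "?P ?g" using \<open>\<exists>y. crit_step beta lo x y\<close> bnd by (rule GreatestI_ex_nat)
  show ?case
  proof (intro allI impI)
    fix y assume y: "?g < y \<and> y \<le> hi"
    show "int (beta ?g) - int ?g < int (beta y) - int y"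
    proof (cases "x < y")
      case True then show ?thesis using step.IH y Pg by (fastforce simp: crit_step_def)
    next
      case False
      show ?thesis
      proof (cases "y = x")
        case True then show ?thesis using Pg by (auto simp: crit_step_def)
      next
        case False
        then have yx: "y < x" using \<open>\<not> x < y\<close> by simp
        have "\<not> ?P y"
        proof
          assume "?P y"
          then have "y \<le> ?g" using bnd by (rule Greatest_le_nat)
          then show False using y by simp
        qed
        then have "\<not> int (beta x) - int (beta y) > int x - int y"
          using yx y Pg by (auto simp: crit_step_def)
        then show ?thesis using Pg by (auto simp: crit_step_def)
      qed
    qed
  qed
qed

lemma crit_finite: "lo < hi \<Longrightarrow> finite (crit_idx beta lo hi)"
  by (rule finite_subset[of _ "{..hi}"]) (auto dest: crit_bounds)

lemma crit_min:
  assumes "lo < hi" "k = Min (crit_idx beta lo hi)"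
  shows "k \<in> crit_idx beta lo hi" "lo < k" "k \<le> hi"
    "\<And>x. lo < x \<Longrightarrow> x < k \<Longrightarrow> int (beta k) - int (beta x) \<le> int k - int x"
    "\<And>y. k < y \<Longrightarrow> y \<le> hi \<Longrightarrow> int (beta y) - int y > int (beta k) - int k"
proof -
  have ne: "crit_idx beta lo hi \<noteq> {}" using crit_idx.start by blast
  show kC: "k \<in> crit_idx beta lo hi" using assms crit_finite ne by simp
  show "lo < k" "k \<le> hi" using crit_bounds[OF kC assms(1)] by auto
  show "\<And>y. k < y \<Longrightarrow> y \<le> hi \<Longrightarrow> int (beta y) - int y > int (beta k) - int k"
    using crit_f[OF kC assms(1)] by blast
  fix x assume x: "lo < x" "x < k"
  show "int (beta k) - int (beta x) \<le> int k - int x"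
  proof (rule ccontr)
    assume "\<not> ?thesis"
    then have ex: "\<exists>y. crit_step beta lo k y" using x by (auto simp: crit_step_def)
    let ?P = "crit_step beta lo k"
    have bnd: "\<And>y. ?P y \<Longrightarrow> y \<le> k" by (auto simp: crit_step_def)
    have Pg: "?P (Greatest ?P)" using ex bnd by (rule GreatestI_ex_nat)
    have "Greatest ?P \<in> crit_idx beta lo hi" using crit_idx.step[OF kC ex] .
    then have "k \<le> Greatest ?P" using assms crit_finite by simp
    then show False using Pg by (auto simp: crit_step_def)
  qed
qed

lemma lam_mono:
  assumes "is_partition n lam" "1 \<le> i" "i \<le> i'" "i' \<le> n"
  shows "lam i' \<le> lam i"
  using assms(3,4)
proof (induction i' rule: dec_induct)
  case base then show ?case by simp
next
  case (step m)
  then have "lam (Suc m) \<le> lam m" using assms(1,2) unfolding is_partition_def by auto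
  then show ?case using step by simp
qed

theorem lemma6p2:
  fixes n :: nat and lam beta :: "nat \<Rightarrow> nat"
  assumes "1 \<le> n"
    and "is_partition n lam"
    and "upper n beta"
    and "\<not> UGC n lam beta"
  shows "\<not> nonpermutable n lam beta"
proof -
  note part = assms(2)
  have up: "\<And>i. 1 \<le> i \<Longrightarrow> i \<le> n \<Longrightarrow> i \<le> beta i \<and> beta i \<le> n"
    using assms(3) unfolding upper_def lam_tuple_def by auto
  have "\<not> flag_critical n lam beta" using assms(3,4) unfolding UGC_def by simp
  then obtain h where h: "1 \<le> h" "h \<le> num_r n lam"
    and fail: "beta (Min (crit_idx beta (qpt n lam h) (qpt n lam (Suc h)))) < beta (qpt n lam h)"
    unfolding flag_critical_def by force
  define q where "q = qpt n lam h"
  define q' where "q' = qpt n lam (Suc h)"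
  define k where "k = Min (crit_idx beta q q')"
  note QF = qpt_facts[OF h, folded q_def q'_def]
  have qR: "1 \<le> q" "q < n" "lam (Suc q) < lam q" using QF(1) unfolding R_set_def by auto
  have qq': "q < q'" "q' \<le> n" using QF(2,3) .
  have bqk: "beta k < beta q" using fail unfolding k_def q_def q'_def .
  note KF = crit_min[OF qq'(1) k_def]
  have kq: "q < k" "k \<le> q'" using KF(2,3) .
  have P1: "beta k + x \<le> beta x + k" if "q < x" "x < k" for x
  proof -
    have "int (beta k) - int (beta x) \<le> int k - int x" using KF(4) that by blast
    then have "int (beta k + x) \<le> int (beta x + k)" by simp
    then show ?thesis by simp
  qed
  have P2: "beta k + y < beta y + k" if "k < y" "y \<le> q'" for y
  proof -
    have "int (beta y) - int y > int (beta k) - int k" using KF(5) that by blast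
    then have "int (beta k + y) < int (beta y + k)" by simp
    then show ?thesis by simp
  qed
  define L where "L = lam (Suc q)"
  have Lc: "\<And>x. q < x \<Longrightarrow> x \<le> q' \<Longrightarrow> lam x = L"
  proof -
    fix x assume x: "q < x" "x \<le> q'"
    define d where "d = x - Suc q"
    have d: "x = Suc q + d" using x unfolding d_def by simp
    show "lam x = L" using x unfolding d
    proof (induction d)
      case 0 then show ?case by (simp add: L_def)
    next
      case (Suc d)
      let ?y = "Suc q + d"
      have y: "q < ?y" "?y < q'" using Suc.prems by auto
      have "?y \<notin> R_set n lam" using QF(4) y by blast
      moreover have "?y \<in> {1..n-1}" using y qq' qR by simp
      ultimately have "\<not> lam (Suc ?y) < lam ?y" unfolding R_set_def by blast
      moreover have "lam (Suc ?y) \<le> lam ?y" using part \<open>?y \<in> {1..n-1}\<close> unfolding is_partition_def by simp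
      ultimately have "lam (Suc ?y) = lam ?y" by simp
      then show ?case using Suc by simp
    qed
  qed
  have La: "\<And>x. q' < x \<Longrightarrow> x \<le> n \<Longrightarrow> lam x < L"
  proof -
    fix x assume x: "q' < x" "x \<le> n"
    then have "q' \<in> R_set n lam" using QF(5) by auto
    then have "lam (Suc q') < lam q'" unfolding R_set_def by simp
    moreover have "lam x \<le> lam (Suc q')" using lam_mono[OF part, of "Suc q'" x] x by simp
    moreover have "lam q' = L" using Lc qq' by simp
    ultimately show "lam x < L" by simp
  qed
  have Lb: "\<And>x. 1 \<le> x \<Longrightarrow> x \<le> q \<Longrightarrow> L < lam x"
  proof -
    fix x assume x: "1 \<le> x" "x \<le> q"
    have "lam q \<le> lam x" using lam_mono[OF part x] qR by simp
    then show "L < lam x" using qR unfolding L_def by simp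
  qed
  have L1: "1 \<le> L"
  proof (rule ccontr)
    assume "\<not> 1 \<le> L"
    then have L0: "L = 0" by simp
    have "q' = n"
    proof (rule ccontr)
      assume "q' \<noteq> n"
      then have "q' < n" using qq' by simp
      then have "lam (Suc q') < L" using La by simp
      then show False using L0 by simp
    qed
    show False
    proof (cases "k < q'")
      case True
      then have "beta k + n < beta n + k" using P2[of n] \<open>q' = n\<close> by simp
      moreover have "k \<le> beta k" "beta n \<le> n" using up kq qR qq' by auto
      ultimately show False by simp
    next
      case False
      then have "k = n" using kq \<open>q' = n\<close> by simp
      then have "n \<le> beta k" using up assms(1) by simp
      moreover have "beta q \<le> n" using up qR by simp
      ultimately show False using bqk by simp
    qed
  qed
  define Pj where "Pj = (\<lambda>x. q \<le> x \<and> x < k \<and> beta k < beta x)"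
  define j where "j = Greatest Pj"
  have Pjq: "Pj q" using kq bqk unfolding Pj_def by simp
  have Pjb: "\<And>y. Pj y \<Longrightarrow> y \<le> k" unfolding Pj_def by simp
  have jP: "Pj j" unfolding j_def using Pjq Pjb by (rule GreatestI_nat)
  hence jf: "q \<le> j" "j < k" "beta k < beta j" unfolding Pj_def by auto
  have jmax: "beta x \<le> beta k" if "j < x" "x < k" for x
  proof (rule ccontr)
    assume "\<not> ?thesis"
    then have "Pj x" using that jf unfolding Pj_def by simp
    then have "x \<le> j" unfolding j_def using Pjb by (rule Greatest_le_nat)
    then show False using that by simp
  qed
  define c where "c = (\<lambda>m. lam m + n - m)"
  define \<pi> where "\<pi> = (\<lambda>m::nat. if j \<le> m \<and> m < k then Suc m else if m = k then j else m)"
  define A1 where "A1 = (\<lambda>m. if j \<le> m \<and> m < k then c (Suc m) else if k \<le> m \<and> m \<le> q' then c m - 1 else c m)"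
  define RR where "RR = (\<lambda>m. if k \<le> m \<and> m \<le> q' then beta k + 1 + (m - k) else m)"
  define \<Lambda> where "\<Lambda> = (\<lambda>m. eses (n - m) m (A1 m) (RR m) (c (\<pi> m)) (beta (\<pi> m)))"
  have cx: "c x + x = lam x + n" if "x \<le> n" for x using that unfolding c_def by simp
  have cm1: "c y < c x" if "1 \<le> x" "x < y" "y \<le> n" for x y
  proof -
    have "lam y \<le> lam x" using lam_mono[OF part, of x y] that by simp
    then show ?thesis using cx[of x] cx[of y] that by simp
  qed
  have pi_range: "1 \<le> \<pi> m \<and> \<pi> m \<le> n" if "1 \<le> m" "m \<le> n" for m
    using that jf kq qq' qR unfolding \<pi>_def by auto
  have inj: "inj \<pi>"
    unfolding inj_def \<pi>_def using jf by auto
  have perm: "\<pi> permutes {1..n}"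
  proof (rule bij_imp_permutes)
    have sub: "\<pi> ` {1..n} \<subseteq> {1..n}" using pi_range by auto
    have "\<pi> ` {1..n} = {1..n}" using endo_inj_surj[OF _ sub] inj_on_subset[OF inj] by auto
    then show "bij_betw \<pi> {1..n} {1..n}" using inj_on_subset[OF inj] by (simp add: bij_betw_def)
    show "\<And>x. x \<notin> {1..n} \<Longrightarrow> \<pi> x = x"
      using jf kq qq' qR unfolding \<pi>_def by auto
  qed
  have pid: "\<pi> \<noteq> id"
  proof
    assume "\<pi> = id"
    then have "\<pi> k = k" by simp
    then show False using jf unfolding \<pi>_def by simp
  qed
  have wf: "n - m \<le> A1 m \<and> A1 m \<le> c (\<pi> m) \<and> m \<le> RR m \<and> RR m \<le> beta (\<pi> m)"
    if m: "1 \<le> m" "m \<le> n" for m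
  proof -
    consider (g1) "m < j" | (g2) "j \<le> m" "m < k" | (g3) "m = k" | (g4) "k < m" "m \<le> q'" | (g5) "q' < m"
      by linarith
    then show ?thesis
    proof cases
      case g1
      then show ?thesis using up[OF m] jf kq unfolding A1_def RR_def \<pi>_def c_def by auto
    next
      case g2
      have "lam (Suc m) = L" using Lc g2 jf kq by simp
      moreover have "Suc m \<le> n" using g2 kq qq' by simp
      ultimately show ?thesis using up[of "Suc m"] g2 L1 unfolding A1_def RR_def \<pi>_def c_def by auto
    next
      case g3
      have "lam k = L" using Lc kq by simp
      moreover have "c k < c j" using cm1[of j k] jf qR kq qq' by simp
      moreover have "k \<le> beta k" using up kq qR qq' by auto
      ultimately show ?thesis using g3 L1 jf kq qq' unfolding A1_def RR_def \<pi>_def c_def by auto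
    next
      case g4
      have "lam m = L" using Lc g4 kq by simp
      moreover have "k \<le> beta k" using up kq qR qq' by auto
      moreover have "beta k + m < beta m + k" using P2 g4 by simp
      ultimately show ?thesis using g4 L1 jf kq qq' m unfolding A1_def RR_def \<pi>_def c_def by auto
    next
      case g5
      then show ?thesis using up[OF m] jf kq unfolding A1_def RR_def \<pi>_def c_def by auto
    qed
  qed
  have disj: "set (\<Lambda> m) \<inter> set (\<Lambda> m') = {}" if mm: "1 \<le> m" "m < m'" "m' \<le> n" for m m'
  proof -
    have m: "1 \<le> m" "m \<le> n" and m': "1 \<le> m'" "m' \<le> n" using mm by auto
    note w = wf[OF m] and w' = wf[OF m']
    have cond: "c (\<pi> m') < A1 m \<or> (A1 m' < c (\<pi> m') \<and> c (\<pi> m') = A1 m \<and> A1 m < c (\<pi> m) \<and> RR m < RR m')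
       \<or> (n - m' < n - m \<and> A1 m' < A1 m \<and> A1 m = c (\<pi> m) \<and> beta (\<pi> m) < RR m')"
    proof -
      consider (g1) "m < j" | (g2) "j \<le> m" "m < k" | (g34) "k \<le> m" "m \<le> q'" | (g5) "q' < m"
        by linarith
      then show ?thesis
      proof cases
        case g1
        have "m < \<pi> m'" using g1 mm jf unfolding \<pi>_def by auto
        then have "c (\<pi> m') < c m" using cm1[of m "\<pi> m'"] pi_range[OF m'] m by simp
        moreover have "A1 m = c m" using g1 jf kq unfolding A1_def by simp
        ultimately show ?thesis by simp
      next
        case g2
        have A1m: "A1 m = c (Suc m)" using g2 unfolding A1_def by simp
        consider (a) "m' < k" | (b) "m' = k" | (c) "k < m'" by linarith
        then show ?thesis
        proof cases
          case a
          then have "\<pi> m' = Suc m'" using g2 mm unfolding \<pi>_def by simp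
          then show ?thesis using cm1[of "Suc m" "Suc m'"] A1m mm a kq qq' by simp
        next
          case b
          have lk: "lam k = L" "lam (Suc m) = L" using Lc kq g2 jf by auto
          have "Suc m \<le> n" using g2 kq qq' by simp
          then have "c k \<le> c (Suc m)" using cm1[of "Suc m" k] g2 kq qq' by (cases "Suc m = k") auto
          moreover have "beta (Suc m) \<le> beta k" using jmax[of "Suc m"] g2 by (cases "Suc m = k") auto
          moreover have "c k \<ge> 1" using cx[of k] lk L1 kq qq' by simp
          ultimately show ?thesis using b g2 mm A1m kq unfolding A1_def RR_def \<pi>_def by auto
        next
          case c
          then have "\<pi> m' = m'" using mm unfolding \<pi>_def by simp
          then show ?thesis using cm1[of "Suc m" m'] A1m mm c g2 by simp
        qed
      next
        case g34
        have lm: "lam m = L" using Lc g34 kq by (cases "m = k") auto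
        have A1m: "A1 m = c m - 1" using g34 jf unfolding A1_def by simp
        have cm: "c m + m = L + n" using cx[of m] lm m by simp
        have pm': "\<pi> m' = m'" using mm g34 unfolding \<pi>_def by simp
        show ?thesis
        proof (cases "q' < m'")
          case True
          have "c m' + m' < L + n" using cx[of m'] La[of m'] True m' by simp
          then have "c m' < c m - 1" using cm mm by linarith
          then show ?thesis using pm' A1m by simp
        next
          case False
          have lm': "lam m' = L" using Lc[of m'] False g34 mm kq by simp
          have cm': "c m' + m' = L + n" using cx[of m'] lm' m' by simp
          show ?thesis
          proof (cases "m' = Suc m")
            case False
            then have "c m' < c m - 1" using cm cm' mm by linarith
            then show ?thesis using pm' A1m by simp
          next
            case True
            have A1m': "A1 m' = c m' - 1" using g34 True \<open>\<not> q' < m'\<close> jf unfolding A1_def by simp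
            have RR: "RR m < RR m'" using g34 True \<open>\<not> q' < m'\<close> unfolding RR_def by simp
            have "A1 m < c (\<pi> m)"
            proof (cases "m = k")
              case True
              then have "\<pi> m = j" unfolding \<pi>_def using jf by simp
              moreover have "c k < c j" using cm1[of j k] jf qR kq qq' by simp
              ultimately show ?thesis using A1m True by simp
            next
              case False
              then have "\<pi> m = m" unfolding \<pi>_def using g34 by simp
              then show ?thesis using A1m cm L1 mm by simp
            qed
            moreover have "c m' - 1 < c m'" "c m' = c m - 1" using cm cm' mm L1 True by arith+
            ultimately show ?thesis using A1m' A1m pm' RR by simp
          qed
        qed
      next
        case g5
        have "A1 m = c m" "\<pi> m' = m'" using g5 kq jf mm unfolding A1_def \<pi>_def by auto
        then show ?thesis using cm1[of m m'] mm by simp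
      qed
    qed
    show ?thesis unfolding \<Lambda>_def
      by (rule eses_disj) (use w w' mm cond in auto)
  qed
  have "\<Lambda> \<in> LD n lam beta \<pi>"
    unfolding LD_def
  proof (intro CollectI conjI ballI impI)
    fix m assume "m \<in> {1..n}"
    then have m: "1 \<le> m" "m \<le> n" by auto
    note w = wf[OF m]
    show "lattice_path (\<Lambda> m)" unfolding \<Lambda>_def by (rule eses_path) (use w m in auto)
    show "hd (\<Lambda> m) = (n - m, m)" unfolding \<Lambda>_def by (rule eses_hd)
    show "last (\<Lambda> m) = terminal n lam beta (\<pi> m)" unfolding \<Lambda>_def terminal_def
      using eses_last w by (simp add: c_def)
  next
    fix m m' assume "m \<in> {1..n}" "m' \<in> {1..n}" "m \<noteq> m'"
    then consider "1 \<le> m" "m < m'" "m' \<le> n" | "1 \<le> m'" "m' < m" "m \<le> n" by fastforce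
    then show "set (\<Lambda> m) \<inter> set (\<Lambda> m') = {}"
    proof cases
      case 1 then show ?thesis using disj by blast
    next
      case 2 then show ?thesis using disj[of m' m] by blast
    qed
  qed
  then show ?thesis unfolding nonpermutable_def using perm pid by blast
qed
end
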